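(* Every 4-regular graph with girth at least six has a strong edge-coloring using at most 22 colors.
   Context: A strong edge-coloring of a graph is a proper edge-coloring in which, in addition, no two edges of the same color lie on a common path of length three. The girth of a graph is the length of its shortest cycle (a loop counts as a cycle of length 1 and a pair of parallel edges as a cycle of length 2). *)

theory Defs
  imports Main
begin

text \<open>A finite simple graph: vertex set V, edge set E of 2-element subsets of V.
  (Girth at least six excludes loops and parallel edges, so simple graphs suffice.)\<close>

definition simple_graph :: "'a set \<Rightarrow> 'a set set \<Rightarrow> bool" where
  "simple_graph V E \<longleftrightarrow> finite V \<and> (\<forall>e\<in>E. e \<subseteq> V \<and> card e = 2)"

definition degree :: "'a set set \<Rightarrow> 'a \<Rightarrow> nat" where
  "degree E v = card {e\<in>E. v \<in> e}"

definition regular :: "'a set \<Rightarrow> 'a set set \<Rightarrow> nat \<Rightarrow> bool" where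
  "regular V E d \<longleftrightarrow> (\<forall>v\<in>V. degree E v = d)"

definition is_cycle :: "'a set set \<Rightarrow> 'a list \<Rightarrow> bool" where
  "is_cycle E vs \<longleftrightarrow> length vs \<ge> 3 \<and> distinct vs \<and>
     (\<forall>i < length vs. {vs ! i, vs ! ((i + 1) mod length vs)} \<in> E)"

definition girth_at_least :: "'a set set \<Rightarrow> nat \<Rightarrow> bool" where
  "girth_at_least E g \<longleftrightarrow> (\<forall>vs. is_cycle E vs \<longrightarrow> length vs \<ge> g)"

definition strong_edge_coloring :: "'a set set \<Rightarrow> ('a set \<Rightarrow> nat) \<Rightarrow> nat \<Rightarrow> bool" where
  "strong_edge_coloring E c k \<longleftrightarrow>
     (\<forall>e\<in>E. c e < k) \<and>
     (\<forall>e\<in>E. \<forall>f\<in>E. e \<noteq> f \<and> e \<inter> f \<noteq> {} \<longrightarrow> c e \<noteq> c f) \<and>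
     (\<forall>u0 u1 u2 u3. distinct [u0, u1, u2, u3] \<and> {u0, u1} \<in> E \<and> {u1, u2} \<in> E \<and> {u2, u3} \<in> E
        \<longrightarrow> c {u0, u1} \<noteq> c {u1, u2} \<and> c {u1, u2} \<noteq> c {u2, u3} \<and> c {u0, u1} \<noteq> c {u2, u3})"

end

theory Submission
  imports Defs
begin


definition adj :: "'a set set \<Rightarrow> 'a \<Rightarrow> 'a \<Rightarrow> bool" where
  "adj E x y \<longleftrightarrow> {x, y} \<in> E"

definition gstar :: "'a set set \<Rightarrow> 'a \<Rightarrow> 'a set set" where
  "gstar E v = {e\<in>E. v \<in> e}"

definition nbrs :: "'a set set \<Rightarrow> 'a \<Rightarrow> 'a set" where
  "nbrs E v = {w. {v, w} \<in> E}"

definition cf :: "'a set set \<Rightarrow> 'a set \<Rightarrow> 'a set \<Rightarrow> bool" where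
  "cf E e f \<longleftrightarrow> e \<noteq> f \<and> (\<exists>g\<in>E. g \<inter> e \<noteq> {} \<and> g \<inter> f \<noteq> {})"

definition conf :: "'a set set \<Rightarrow> 'a set \<Rightarrow> 'a set set" where
  "conf E e = {f\<in>E. cf E e f}"

definition propc :: "'a set set \<Rightarrow> 'a set set \<Rightarrow> ('a set \<Rightarrow> nat) \<Rightarrow> bool" where
  "propc E D c \<longleftrightarrow> (\<forall>e\<in>D. c e < 22) \<and> (\<forall>e\<in>D. \<forall>f\<in>D. cf E e f \<longrightarrow> c e \<noteq> c f)"

lemma adj_sym: "adj E x y \<Longrightarrow> adj E y x"
  by (simp add: adj_def insert_commute)

lemma cf_sym: "cf E e f \<Longrightarrow> cf E f e"
  unfolding cf_def by blast

lemma simple_finite_E: "simple_graph V E \<Longrightarrow> finite E"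
proof -
  assume "simple_graph V E"
  then have "E \<subseteq> Pow V" "finite V" unfolding simple_graph_def by auto
  then show "finite E" by (simp add: finite_subset)
qed

lemma simple_edge: "simple_graph V E \<Longrightarrow> e \<in> E \<Longrightarrow> \<exists>x y. e = {x,y} \<and> x \<noteq> y \<and> x \<in> V \<and> y \<in> V"
proof -
  assume a: "simple_graph V E" "e \<in> E"
  then have "card e = 2" "e \<subseteq> V" unfolding simple_graph_def by auto
  then show ?thesis unfolding card_2_iff by auto
qed

lemma adj_neq: "simple_graph V E \<Longrightarrow> adj E x y \<Longrightarrow> x \<noteq> y"
proof
  assume a: "simple_graph V E" "adj E x y" "x = y"
  then have "card {x,y} = 2" unfolding simple_graph_def adj_def by auto
  then show False using a(3) by simp
qed

lemma adj_V: "simple_graph V E \<Longrightarrow> adj E x y \<Longrightarrow> x \<in> V \<and> y \<in> V"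
  unfolding simple_graph_def adj_def by blast

lemma card_gstar: "simple_graph V E \<Longrightarrow> regular V E 4 \<Longrightarrow> v \<in> V \<Longrightarrow> card (gstar E v) = 4"
  unfolding regular_def degree_def gstar_def by simp

lemma finite_gstar: "simple_graph V E \<Longrightarrow> finite (gstar E v)"
  unfolding gstar_def using simple_finite_E by fastforce

lemma gstar_nbrs: "simple_graph V E \<Longrightarrow> gstar E v = (\<lambda>w. {v,w}) ` nbrs E v"
proof
  assume G: "simple_graph V E"
  show "gstar E v \<subseteq> (\<lambda>w. {v,w}) ` nbrs E v"
  proof
    fix e assume "e \<in> gstar E v"
    then have e: "e \<in> E" "v \<in> e" by (auto simp: gstar_def)
    then obtain x y where "e = {x,y}" using simple_edge[OF G] by blast
    then have "e = {v, (if v = x then y else x)}" using e(2) by auto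
    then show "e \<in> (\<lambda>w. {v,w}) ` nbrs E v" using e(1) unfolding nbrs_def by blast
  qed
  show "(\<lambda>w. {v,w}) ` nbrs E v \<subseteq> gstar E v" unfolding nbrs_def gstar_def by auto
qed

lemma card_nbrs: "simple_graph V E \<Longrightarrow> regular V E 4 \<Longrightarrow> v \<in> V \<Longrightarrow> card (nbrs E v) = 4"
proof -
  assume a: "simple_graph V E" "regular V E 4" "v \<in> V"
  have "inj_on (\<lambda>w. {v,w}) (nbrs E v)" by (auto simp: inj_on_def doubleton_eq_iff)
  then have "card (gstar E v) = card (nbrs E v)" using gstar_nbrs[OF a(1)] card_image by metis
  then show ?thesis using card_gstar[OF a] by simp
qed

lemma nbrs_adj: "w \<in> nbrs E v \<longleftrightarrow> adj E v w"
  by (simp add: nbrs_def adj_def)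

lemma cyc3: assumes "girth_at_least E 6" "distinct [a,b,c]" "adj E a b" "adj E b c" "adj E c a"
  shows False
proof -
  have "{[a,b,c] ! i, [a,b,c] ! ((i + 1) mod 3)} \<in> E" if "i < 3" for i
  proof -
    have "i = 0 \<or> i = 1 \<or> i = 2" using that by linarith
    then show ?thesis using assms(3-) unfolding adj_def by auto
  qed
  then have "is_cycle E [a,b,c]" using assms(2) unfolding is_cycle_def by simp
  then show False using assms(1) unfolding girth_at_least_def by fastforce
qed

lemma cyc4: assumes "girth_at_least E 6" "distinct [a,b,c,d]" "adj E a b" "adj E b c" "adj E c d" "adj E d a"
  shows False
proof -
  have "{[a,b,c,d] ! i, [a,b,c,d] ! ((i + 1) mod 4)} \<in> E" if "i < 4" for i
  proof -
    have "i = 0 \<or> i = 1 \<or> i = 2 \<or> i = 3" using that by linarith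
    then show ?thesis using assms(3-) unfolding adj_def by auto
  qed
  then have "is_cycle E [a,b,c,d]" using assms(2) unfolding is_cycle_def by simp
  then show False using assms(1) unfolding girth_at_least_def by fastforce
qed

lemma cyc5: assumes "girth_at_least E 6" "distinct [a,b,c,d,e]" "adj E a b" "adj E b c" "adj E c d" "adj E d e" "adj E e a"
  shows False
proof -
  have "{[a,b,c,d,e] ! i, [a,b,c,d,e] ! ((i + 1) mod 5)} \<in> E" if "i < 5" for i
  proof -
    have "i = 0 \<or> i = 1 \<or> i = 2 \<or> i = 3 \<or> i = 4" using that by linarith
    then show ?thesis using assms(3-) unfolding adj_def by auto
  qed
  then have "is_cycle E [a,b,c,d,e]" using assms(2) unfolding is_cycle_def by simp
  then show False using assms(1) unfolding girth_at_least_def by fastforce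
qed

lemma conf_card: assumes G: "simple_graph V E" "regular V E 4" and eE: "e \<in> E"
  shows "card (conf E e) \<le> 24"
proof -
  obtain u v where e: "e = {u,v}" "u \<noteq> v" "u \<in> V" "v \<in> V" using simple_edge[OF G(1) eE] by blast
  define B where "B = (\<lambda>u. \<Union>g\<in>gstar E u - {e}. \<Union>x\<in>g-{u}. gstar E x - {g})"
  have sub: "conf E e \<subseteq> (gstar E u - {e}) \<union> (gstar E v - {e}) \<union> B u \<union> B v"
  proof
    fix f assume "f \<in> conf E e"
    then obtain g where f: "f \<in> E" "f \<noteq> e" "g \<in> E" "g \<inter> e \<noteq> {}" "g \<inter> f \<noteq> {}"
      unfolding conf_def cf_def by blast
    show "f \<in> (gstar E u - {e}) \<union> (gstar E v - {e}) \<union> B u \<union> B v"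
    proof (cases "g = e")
      case True then show ?thesis using f e by (auto simp: gstar_def)
    next
      case False
      obtain t where t: "t \<in> g" "t \<in> f" using f by blast
      have "u \<in> g \<or> v \<in> g" using f e by blast
      then show ?thesis
      proof
        assume ug: "u \<in> g"
        show ?thesis
        proof (cases "t = u")
          case True then show ?thesis using t f by (auto simp: gstar_def)
        next
          case tu: False
          show ?thesis
          proof (cases "f = g")
            case True then show ?thesis using ug f by (auto simp: gstar_def)
          next
            case False
            have "f \<in> B u" unfolding B_def using ug t tu False f \<open>g \<noteq> e\<close>
              by (auto simp: gstar_def)
            then show ?thesis by blast
          qed
        qed
      next
        assume vg: "v \<in> g"
        show ?thesis
        proof (cases "t = v")
          case True then show ?thesis using t f by (auto simp: gstar_def)
        next
          case tv: False
          show ?thesis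
          proof (cases "f = g")
            case True then show ?thesis using vg f by (auto simp: gstar_def)
          next
            case False
            have "f \<in> B v" unfolding B_def using vg t tv False f \<open>g \<noteq> e\<close>
              by (auto simp: gstar_def)
            then show ?thesis by blast
          qed
        qed
      qed
    qed
  qed
  have fin: "finite (gstar E w)" for w using finite_gstar[OF G(1)] .
  have s3: "card (gstar E w - {e}) = 3" if "w \<in> e" for w
  proof -
    have "w \<in> V" using that e by auto
    then have "card (gstar E w) = 4" using card_gstar[OF G] by simp
    moreover have "e \<in> gstar E w" using that eE by (simp add: gstar_def)
    ultimately show ?thesis using fin by (simp add: card_Diff_singleton)
  qed
  have inner: "card (\<Union>x\<in>g-{w}. gstar E x - {g}) \<le> 3" if "g \<in> gstar E w" for g w
  proof -
    have "g \<in> E" "w \<in> g" using that by (auto simp: gstar_def)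
    obtain p q where pq: "g = {p,q}" "p \<noteq> q" "p \<in> V" "q \<in> V"
      using simple_edge[OF G(1) \<open>g \<in> E\<close>] by blast
    obtain x where gx: "g = {w,x}" "w \<noteq> x" "x \<in> V"
    proof (cases "w = p")
      case True then show ?thesis using that pq by blast
    next
      case False then have "w = q" using pq \<open>w \<in> g\<close> by blast
      then show ?thesis using that[of p] pq by (simp add: insert_commute)
    qed
    then have "g - {w} = {x}" by auto
    moreover have "card (gstar E x - {g}) = 3"
    proof -
      have "card (gstar E x) = 4" using card_gstar[OF G gx(3)] .
      moreover have "g \<in> gstar E x" using \<open>g \<in> E\<close> gx by (simp add: gstar_def)
      ultimately show ?thesis using fin by (simp add: card_Diff_singleton)
    qed
    ultimately show ?thesis by simp
  qed
  have Bc: "card (B w) \<le> 9" if "w \<in> e" for w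
  proof -
    have "card (B w) \<le> (\<Sum>g\<in>gstar E w - {e}. card (\<Union>x\<in>g-{w}. gstar E x - {g}))"
      unfolding B_def by (rule card_UN_le) (use fin in auto)
    also have "\<dots> \<le> (\<Sum>g\<in>gstar E w - {e}. 3)" by (rule sum_mono) (use inner in auto)
    also have "\<dots> = 9" using s3[OF that] by simp
    finally show ?thesis .
  qed
  have fe: "finite g" if "g \<in> E" for g using G(1) that unfolding simple_graph_def
    by (metis card.infinite zero_neq_numeral)
  have finB: "finite (B w)" for w
    unfolding B_def by (intro finite_UN_I finite_Diff fin) (auto simp: gstar_def fe)
  have "card (conf E e) \<le> card ((gstar E u - {e}) \<union> (gstar E v - {e}) \<union> B u \<union> B v)"
    by (rule card_mono) (use fin finB sub in auto)
  also have "\<dots> \<le> card (gstar E u - {e}) + card (gstar E v - {e}) + card (B u) + card (B v)"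
  proof -
    let ?A = "gstar E u - {e}" and ?B = "gstar E v - {e}"
    have "card (?A \<union> ?B \<union> B u \<union> B v) \<le> card (?A \<union> ?B \<union> B u) + card (B v)" by (rule card_Un_le)
    moreover have "card (?A \<union> ?B \<union> B u) \<le> card (?A \<union> ?B) + card (B u)" by (rule card_Un_le)
    moreover have "card (?A \<union> ?B) \<le> card ?A + card ?B" by (rule card_Un_le)
    ultimately show ?thesis by linarith
  qed
  also have "\<dots> \<le> 3 + 3 + 9 + 9"
  proof -
    have "u \<in> e" "v \<in> e" using e by auto
    then show ?thesis using s3[of u] s3[of v] Bc[of u] Bc[of v] by linarith
  qed
  finally show ?thesis by simp
qed



lemma step:
  assumes P: "propc E D c" and DE: "D \<subseteq> E" and eD: "e \<notin> D" and eE: "e \<in> E" and fE: "finite E"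
    and cd: "card (c ` (conf E e \<inter> D)) < 22"
  shows "\<exists>c'. propc E (insert e D) c' \<and> (\<forall>f\<in>D. c' f = c f)"
proof -
  have "\<not> {0..<22} \<subseteq> c ` (conf E e \<inter> D)"
  proof
    assume "{0..<22} \<subseteq> c ` (conf E e \<inter> D)"
    then have "card {0..<(22::nat)} \<le> card (c ` (conf E e \<inter> D))"
      by (rule card_mono[rotated]) (use fE in \<open>auto simp: conf_def\<close>)
    then show False using cd by simp
  qed
  then obtain col0 where "col0 \<in> {0..<22}" "col0 \<notin> c ` (conf E e \<inter> D)" by blast
  then obtain col where col: "col < 22" "col \<notin> c ` (conf E e \<inter> D)" by auto
  define c' where "c' = c(e := col)"
  have agree: "\<forall>f\<in>D. c' f = c f" using eD unfolding c'_def by auto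
  have "propc E (insert e D) c'"
    unfolding propc_def
  proof (intro conjI ballI impI)
    fix f assume "f \<in> insert e D"
    then show "c' f < 22" using P col unfolding propc_def c'_def by auto
  next
    fix f g assume f: "f \<in> insert e D" and g: "g \<in> insert e D" and fg: "cf E f g"
    have neq: "f \<noteq> g" using fg unfolding cf_def by blast
    show "c' f \<noteq> c' g"
    proof (cases "f = e")
      case True
      then have "g \<in> D" using g neq by auto
      then have "g \<in> conf E e \<inter> D" using fg True DE unfolding conf_def by auto
      then show ?thesis using col True neq agree \<open>g \<in> D\<close> unfolding c'_def by force
    next
      case fne: False
      show ?thesis
      proof (cases "g = e")
        case True
        then have "f \<in> D" using f neq by auto
        then have "f \<in> conf E e \<inter> D" using cf_sym[OF fg] True DE unfolding conf_def by auto
        then show ?thesis using col True neq agree \<open>f \<in> D\<close> unfolding c'_def by force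
      next
        case False
        then have "f \<in> D" "g \<in> D" using f g fne by auto
        then show ?thesis using P fg agree unfolding propc_def by auto
      qed
    qed
  qed
  then show ?thesis using agree by blast
qed

lemma greedy_list:
  assumes "propc E D c" "D \<subseteq> E" "set xs \<subseteq> E" "set xs \<inter> D = {}" "distinct xs" "finite E"
    "\<forall>i<length xs. card (conf E (xs!i) \<inter> (D \<union> set (take i xs))) < 22"
  shows "\<exists>c'. propc E (D \<union> set xs) c' \<and> (\<forall>f\<in>D. c' f = c f)"
  using assms
proof (induction xs rule: rev_induct)
  case Nil
  then show ?case by auto
next
  case (snoc x xs)
  have h: "\<forall>i<length xs. card (conf E (xs!i) \<inter> (D \<union> set (take i xs))) < 22"
  proof (intro allI impI)
    fix i assume i: "i < length xs"
    then have "(xs @ [x]) ! i = xs ! i" "take i (xs @ [x]) = take i xs" by (auto simp: nth_append)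
    then show "card (conf E (xs!i) \<inter> (D \<union> set (take i xs))) < 22"
      using snoc.prems(7) i by (metis length_append_singleton less_SucI)
  qed
  obtain c1 where c1: "propc E (D \<union> set xs) c1" "\<forall>f\<in>D. c1 f = c f"
    using snoc.IH[OF snoc.prems(1,2) _ _ _ snoc.prems(6) h] snoc.prems(3-5) by auto
  have lx: "card (conf E x \<inter> (D \<union> set xs)) < 22"
    using snoc.prems(7)[rule_format, of "length xs"] by simp
  have fin: "finite (conf E x \<inter> (D \<union> set xs))" using snoc.prems(6) unfolding conf_def by auto
  have "card (c1 ` (conf E x \<inter> (D \<union> set xs))) < 22"
    using card_image_le[OF fin, of c1] lx by linarith
  moreover have "x \<notin> D \<union> set xs" using snoc.prems(4,5) by auto
  moreover have "D \<union> set xs \<subseteq> E" "x \<in> E" using snoc.prems(2,3) by auto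
  ultimately obtain c2 where c2: "propc E (insert x (D \<union> set xs)) c2" "\<forall>f\<in>D \<union> set xs. c2 f = c1 f"
    using step[OF c1(1) _ _ _ snoc.prems(6)] by blast
  have "D \<union> set (xs @ [x]) = insert x (D \<union> set xs)" by auto
  then show ?case using c1 c2 by auto
qed

lemma repeat_card:
  assumes "finite X" "Y \<subseteq> X" "\<forall>y\<in>Y. \<exists>x\<in>X-Y. c x = c y"
  shows "card (c ` X) \<le> card X - card Y"
proof -
  have "c ` X \<subseteq> c ` (X - Y)"
  proof
    fix z assume "z \<in> c ` X"
    then obtain x where x: "x \<in> X" "z = c x" by blast
    show "z \<in> c ` (X - Y)"
    proof (cases "x \<in> Y")
      case True
      then obtain x' where "x' \<in> X - Y" "c x' = c x" using assms(3) by blast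
      then show ?thesis using x by (metis image_eqI)
    next
      case False then show ?thesis using x by blast
    qed
  qed
  then have "card (c ` X) \<le> card (c ` (X - Y))" using assms(1) by (intro card_mono) auto
  also have "\<dots> \<le> card (X - Y)" using assms(1) by (intro card_image_le) auto
  also have "\<dots> = card X - card Y" using assms(1,2) finite_subset card_Diff_subset by blast
  finally show ?thesis .
qed



lemma nbrs3:
  assumes G: "simple_graph V E" "regular V E 4" and v: "v \<in> V" and t: "adj E v t"
  shows "\<exists>a b c. distinct [a,b,c] \<and> nbrs E v - {t} = {a,b,c}"
proof -
  have "card (nbrs E v) = 4" using card_nbrs[OF G v] .
  moreover have "t \<in> nbrs E v" using t by (simp add: nbrs_adj)
  moreover have "finite (nbrs E v)" using \<open>card (nbrs E v) = 4\<close> card.infinite by fastforce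
  ultimately have "card (nbrs E v - {t}) = 3" by (simp add: card_Diff_singleton)
  then show ?thesis unfolding card_3_iff by auto
qed

lemma exists_nbr:
  assumes G: "simple_graph V E" "regular V E 4" and v: "v \<in> V"
  shows "\<exists>t. adj E v t"
proof -
  have "card (nbrs E v) = 4" using card_nbrs[OF G v] .
  then have "nbrs E v \<noteq> {}" by auto
  then show ?thesis by (auto simp: nbrs_adj)
qed

lemma exists_other:
  assumes G: "simple_graph V E" "regular V E 4" and v: "v \<in> V"
  shows "\<exists>x. adj E v x \<and> x \<noteq> t"
proof -
  obtain s where s: "adj E v s" using exists_nbr[OF G v] by blast
  obtain a b c where "distinct [a,b,c]" "nbrs E v - {s} = {a,b,c}" using nbrs3[OF G v s] by blast
  then show ?thesis by (metis Diff_iff distinct_length_2_or_more insertI1 insert_commute nbrs_adj)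
qed

lemma noconf:
  assumes G: "simple_graph V E" and d: "a \<notin> {c,d}" "b \<notin> {c,d}"
    and n: "\<not> adj E a c" "\<not> adj E a d" "\<not> adj E b c" "\<not> adj E b d"
  shows "\<not> cf E {a,b} {c,d}"
proof
  assume "cf E {a,b} {c,d}"
  then obtain g where g: "g \<in> E" "g \<inter> {a,b} \<noteq> {}" "g \<inter> {c,d} \<noteq> {}" unfolding cf_def by blast
  obtain p q where pq: "g = {p,q}" "p \<noteq> q" using simple_edge[OF G g(1)] by blast
  have gE: "adj E p q" "adj E q p" using g(1) pq by (auto simp: adj_def insert_commute)
  show False using g(2,3) gE n d unfolding pq by auto
qed

definition lvl :: "'a set set \<Rightarrow> 'a \<Rightarrow> 'a \<Rightarrow> nat" where
  "lvl E r v = (LEAST n. (adj E ^^ n) r v)"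

lemma lvl_parent:
  assumes "(adj E)\<^sup>*\<^sup>* r v" "v \<noteq> r"
  shows "\<exists>p. adj E p v \<and> lvl E r p < lvl E r v"
proof -
  obtain n where n: "(adj E ^^ n) r v" using assms(1) rtranclp_power by metis
  then have L: "(adj E ^^ lvl E r v) r v" unfolding lvl_def by (rule LeastI)
  show ?thesis
  proof (cases "lvl E r v")
    case 0
    then show ?thesis using L assms(2) by simp
  next
    case (Suc m)
    then obtain p where p: "(adj E ^^ m) r p" "adj E p v" using L by (auto elim: relpowp_Suc_E)
    then have "lvl E r p \<le> m" unfolding lvl_def using Least_le[of "\<lambda>n. (adj E ^^ n) r p"] by blast
    then show ?thesis using p Suc by auto
  qed
qed



lemma cfI: "e \<noteq> f \<Longrightarrow> g \<in> E \<Longrightarrow> u \<in> g \<Longrightarrow> u \<in> e \<Longrightarrow> v \<in> g \<Longrightarrow> v \<in> f \<Longrightarrow> cf E e f"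
  unfolding cf_def by blast

lemma root_step:
  assumes P: "propc E D c" and DE: "D \<subseteq> E" and eD: "e \<notin> D" and eE: "e \<in> E" and fE: "finite E"
    and cc: "card (conf E e) \<le> 24" and U: "U \<subseteq> conf E e" "U \<inter> D = {}"
    and Y: "Y \<subseteq> conf E e \<inter> D" "\<forall>y\<in>Y. \<exists>x\<in>(conf E e \<inter> D) - Y. c x = c y"
    and UY: "card U + card Y \<ge> 3"
  shows "\<exists>c'. propc E (insert e D) c' \<and> (\<forall>f\<in>D. c' f = c f)"
proof -
  have fc: "finite (conf E e)" using fE unfolding conf_def by auto
  have fU: "finite U" using U(1) fc finite_subset by blast
  have X: "conf E e \<inter> D \<subseteq> conf E e - U" using U by blast
  have "card (conf E e \<inter> D) \<le> card (conf E e - U)" using X fc by (intro card_mono) auto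
  also have "\<dots> = card (conf E e) - card U" using U(1) fU by (simp add: card_Diff_subset)
  finally have c1: "card (conf E e \<inter> D) \<le> card (conf E e) - card U" .
  have "card (c ` (conf E e \<inter> D)) \<le> card (conf E e \<inter> D) - card Y"
    using repeat_card[of "conf E e \<inter> D" Y c] fc Y by auto
  then have "card (c ` (conf E e \<inter> D)) < 22" using c1 cc UY by linarith
  then show ?thesis using step[OF P DE eD eE fE] by blast
qed

lemma rep2: "x1 \<in> X \<Longrightarrow> x2 \<in> X \<Longrightarrow> x1 \<notin> {y1,y2} \<Longrightarrow> x2 \<notin> {y1,y2} \<Longrightarrow> c x1 = c y1 \<Longrightarrow> c x2 = c y2
  \<Longrightarrow> \<forall>y\<in>{y1,y2}. \<exists>x\<in>X-{y1,y2}. c x = c y"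
  by auto

lemma rep3: "x1 \<in> X \<Longrightarrow> x2 \<in> X \<Longrightarrow> x3 \<in> X \<Longrightarrow> x1 \<notin> {y1,y2,y3} \<Longrightarrow> x2 \<notin> {y1,y2,y3} \<Longrightarrow> x3 \<notin> {y1,y2,y3}
  \<Longrightarrow> c x1 = c y1 \<Longrightarrow> c x2 = c y2 \<Longrightarrow> c x3 = c y3
  \<Longrightarrow> \<forall>y\<in>{y1,y2,y3}. \<exists>x\<in>X-{y1,y2,y3}. c x = c y"
  by auto

lemma connected_case:
  assumes G: "simple_graph V E" "regular V E 4" and gir: "girth_at_least E 6"
    and rV: "r \<in> V" and conn: "\<forall>v\<in>V. (adj E)\<^sup>*\<^sup>* r v"
  shows "\<exists>c. propc E E c"
proof -
  have fE: "finite E" using simple_finite_E[OF G(1)] .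
  note c3 = cyc3[OF gir] and c4 = cyc4[OF gir] and c5 = cyc5[OF gir]
  note aV = adj_V[OF G(1)] and an = adj_neq[OF G(1)]
  obtain a4 where t: "adj E r a4" using exists_nbr[OF G rV] by blast
  obtain a1 a2 a3 where b: "distinct [a1,a2,a3]" "nbrs E r - {a4} = {a1,a2,a3}"
    using nbrs3[OF G rV t] by blast
  have a4N: "a4 \<in> nbrs E r" using t by (simp add: nbrs_adj)
  have Nr: "nbrs E r = {a1,a2,a3,a4}" using b(2) a4N by blast
  have "a4 \<notin> {a1,a2,a3}" using b(2) by blast
  then have da: "distinct [a1,a2,a3,a4]" using b(1) by auto
  have ra: "adj E r a1" "adj E r a2" "adj E r a3" "adj E r a4" using Nr by (auto simp: nbrs_adj[symmetric])
  have ar: "adj E a1 r" "adj E a2 r" "adj E a3 r" "adj E a4 r" using ra adj_sym by metis+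
  have aVs: "a1 \<in> V" "a2 \<in> V" "a3 \<in> V" "a4 \<in> V" using ra aV by auto
  have anr: "a1 \<noteq> r" "a2 \<noteq> r" "a3 \<noteq> r" "a4 \<noteq> r" using ar an by auto
  obtain w1 w2 w3 where w: "distinct [w1,w2,w3]" "nbrs E a4 - {r} = {w1,w2,w3}"
    using nbrs3[OF G aVs(4) ar(4)] by blast
  have aw: "adj E a4 w1" "adj E a4 w2" "adj E a4 w3" using w(2) by (auto simp: nbrs_adj[symmetric])
  have wa: "adj E w1 a4" "adj E w2 a4" "adj E w3 a4" using aw adj_sym by metis+
  have wnr: "w1 \<noteq> r" "w2 \<noteq> r" "w3 \<noteq> r" using w(2) by auto
  have wVs: "w1 \<in> V" "w2 \<in> V" using aw aV by auto
  obtain x1 where x1: "adj E a1 x1" "x1 \<noteq> r" using exists_other[OF G aVs(1)] by blast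
  obtain y1 where y1: "adj E a2 y1" "y1 \<noteq> r" using exists_other[OF G aVs(2)] by blast
  obtain u3 where u3: "adj E a3 u3" "u3 \<noteq> r" using exists_other[OF G aVs(3)] by blast
  obtain z1 where z1: "adj E w1 z1" "z1 \<noteq> a4" using exists_other[OF G wVs(1)] by blast
  obtain z2 where z2: "adj E w2 z2" "z2 \<noteq> a4" using exists_other[OF G wVs(2)] by blast
  have x1a: "adj E x1 a1" using x1 adj_sym by metis
  have y1a: "adj E y1 a2" using y1 adj_sym by metis
  have u3a: "adj E u3 a3" using u3 adj_sym by metis
  have z1w: "adj E z1 w1" using z1 adj_sym by metis
  have z2w: "adj E z2 w2" using z2 adj_sym by metis
  have "x1 \<noteq> a1" using an x1 by blast
  have "x1 \<noteq> a2" using c3[of r a1 a2] da anr ra x1 ar by auto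
  have "x1 \<noteq> a3" using c3[of r a1 a3] da anr ra x1 ar by auto
  have "x1 \<noteq> a4" using c3[of r a1 a4] da anr ra x1 ar by auto
  have "y1 \<noteq> a2" using an y1 by blast
  have "y1 \<noteq> a1" using c3[of r a2 a1] da anr ra y1 ar by auto
  have "y1 \<noteq> a3" using c3[of r a2 a3] da anr ra y1 ar by auto
  have "y1 \<noteq> a4" using c3[of r a2 a4] da anr ra y1 ar by auto
  have "u3 \<noteq> a3" using an u3 by blast
  have "u3 \<noteq> a1" using c3[of r a3 a1] da anr ra u3 ar by auto
  have "u3 \<noteq> a2" using c3[of r a3 a2] da anr ra u3 ar by auto
  have "u3 \<noteq> a4" using c3[of r a3 a4] da anr ra u3 ar by auto
  have "w1 \<noteq> a4" "w2 \<noteq> a4" "w3 \<noteq> a4" using an aw by blast+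
  have "w1 \<noteq> a1" using c3[of r a4 a1] da anr ra aw ar by auto
  have "w1 \<noteq> a2" using c3[of r a4 a2] da anr ra aw ar by auto
  have "w1 \<noteq> a3" using c3[of r a4 a3] da anr ra aw ar by auto
  have "w2 \<noteq> a1" using c3[of r a4 a1] da anr ra aw ar by auto
  have "w2 \<noteq> a2" using c3[of r a4 a2] da anr ra aw ar by auto
  have "w2 \<noteq> a3" using c3[of r a4 a3] da anr ra aw ar by auto
  have "w3 \<noteq> a1" using c3[of r a4 a1] da anr ra aw ar by auto
  have "w3 \<noteq> a2" using c3[of r a4 a2] da anr ra aw ar by auto
  have "w3 \<noteq> a3" using c3[of r a4 a3] da anr ra aw ar by auto
  note dA = \<open>x1 \<noteq> a1\<close> \<open>x1 \<noteq> a2\<close> \<open>x1 \<noteq> a3\<close> \<open>x1 \<noteq> a4\<close>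
     \<open>y1 \<noteq> a1\<close> \<open>y1 \<noteq> a2\<close> \<open>y1 \<noteq> a3\<close> \<open>y1 \<noteq> a4\<close>
     \<open>u3 \<noteq> a1\<close> \<open>u3 \<noteq> a2\<close> \<open>u3 \<noteq> a3\<close> \<open>u3 \<noteq> a4\<close>
     \<open>w1 \<noteq> a1\<close> \<open>w1 \<noteq> a2\<close> \<open>w1 \<noteq> a3\<close> \<open>w1 \<noteq> a4\<close>
     \<open>w2 \<noteq> a1\<close> \<open>w2 \<noteq> a2\<close> \<open>w2 \<noteq> a3\<close> \<open>w2 \<noteq> a4\<close>
     \<open>w3 \<noteq> a1\<close> \<open>w3 \<noteq> a2\<close> \<open>w3 \<noteq> a3\<close> \<open>w3 \<noteq> a4\<close>
  have "x1 \<noteq> y1" using c4[of r a1 x1 a2] da anr ra x1 y1a dA ar by auto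
  have "x1 \<noteq> u3" using c4[of r a1 x1 a3] da anr ra x1 u3a dA ar by auto
  have "y1 \<noteq> u3" using c4[of r a2 y1 a3] da anr ra y1 u3a dA ar by auto
  have "x1 \<noteq> w1" "x1 \<noteq> w2" "x1 \<noteq> w3" using c4[of r a1 x1 a4] da anr ra x1 wa dA ar by auto
  have "y1 \<noteq> w1" "y1 \<noteq> w2" "y1 \<noteq> w3" using c4[of r a2 y1 a4] da anr ra y1 wa dA ar by auto
  have "u3 \<noteq> w1" "u3 \<noteq> w2" "u3 \<noteq> w3" using c4[of r a3 u3 a4] da anr ra u3 wa dA ar by auto
  note dB = \<open>x1 \<noteq> y1\<close> \<open>x1 \<noteq> u3\<close> \<open>y1 \<noteq> u3\<close> \<open>x1 \<noteq> w1\<close> \<open>x1 \<noteq> w2\<close> \<open>x1 \<noteq> w3\<close>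
    \<open>y1 \<noteq> w1\<close> \<open>y1 \<noteq> w2\<close> \<open>y1 \<noteq> w3\<close> \<open>u3 \<noteq> w1\<close> \<open>u3 \<noteq> w2\<close> \<open>u3 \<noteq> w3\<close>

  have "z1 \<noteq> w1" using an z1 by blast
  have "z2 \<noteq> w2" using an z2 by blast
  have "z1 \<noteq> r" using c3[of r a4 w1] da anr wnr ra aw z1 dA by auto
  have "z2 \<noteq> r" using c3[of r a4 w2] da anr wnr ra aw z2 dA by auto
  have "z1 \<noteq> a1" using c4[of r a4 w1 a1] da anr wnr ra aw z1 dA ar by auto
  have "z1 \<noteq> a2" using c4[of r a4 w1 a2] da anr wnr ra aw z1 dA ar by auto
  have "z1 \<noteq> a3" using c4[of r a4 w1 a3] da anr wnr ra aw z1 dA ar by auto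
  have "z2 \<noteq> a1" using c4[of r a4 w2 a1] da anr wnr ra aw z2 dA ar by auto
  have "z2 \<noteq> a2" using c4[of r a4 w2 a2] da anr wnr ra aw z2 dA ar by auto
  have "z2 \<noteq> a3" using c4[of r a4 w2 a3] da anr wnr ra aw z2 dA ar by auto
  have "z1 \<noteq> w2" using c3[of a4 w1 w2] w aw wa z1 dA by auto
  have "z1 \<noteq> w3" using c3[of a4 w1 w3] w aw wa z1 dA by auto
  have "z2 \<noteq> w1" using c3[of a4 w2 w1] w aw wa z2 dA by auto
  have "z2 \<noteq> w3" using c3[of a4 w2 w3] w aw wa z2 dA by auto
  have "z1 \<noteq> x1" using c5[of r a4 w1 x1 a1] da anr wnr ra aw z1 x1a ar dA dB x1 y1 u3 by auto
  have "z1 \<noteq> y1" using c5[of r a4 w1 y1 a2] da anr wnr ra aw z1 y1a ar dA dB x1 y1 u3 by auto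
  have "z1 \<noteq> u3" using c5[of r a4 w1 u3 a3] da anr wnr ra aw z1 u3a ar dA dB x1 y1 u3 by auto
  have "z2 \<noteq> x1" using c5[of r a4 w2 x1 a1] da anr wnr ra aw z2 x1a ar dA dB x1 y1 u3 by auto
  have "z2 \<noteq> y1" using c5[of r a4 w2 y1 a2] da anr wnr ra aw z2 y1a ar dA dB x1 y1 u3 by auto
  have "z2 \<noteq> u3" using c5[of r a4 w2 u3 a3] da anr wnr ra aw z2 u3a ar dA dB x1 y1 u3 by auto
  have z2w1: "\<not> adj E w1 z2" using c4[of a4 w1 z2 w2] w aw wa z2w dA \<open>z2 \<noteq> w1\<close> \<open>z2 \<noteq> w2\<close> z2 by auto
  have "z1 \<noteq> z2" using z2w1 z1 by auto
  have dl: "distinct [r,a1,a2,a3,a4,x1,y1,u3,w1,w2,w3,z1,z2]"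
    using da anr wnr w(1) x1 y1 u3 z1 z2 dA dB \<open>z1 \<noteq> w1\<close> \<open>z2 \<noteq> w2\<close> \<open>z1 \<noteq> r\<close> \<open>z2 \<noteq> r\<close>
      \<open>z1 \<noteq> a1\<close> \<open>z1 \<noteq> a2\<close> \<open>z1 \<noteq> a3\<close> \<open>z2 \<noteq> a1\<close> \<open>z2 \<noteq> a2\<close> \<open>z2 \<noteq> a3\<close>
      \<open>z1 \<noteq> w2\<close> \<open>z1 \<noteq> w3\<close> \<open>z2 \<noteq> w1\<close> \<open>z2 \<noteq> w3\<close> \<open>z1 \<noteq> x1\<close> \<open>z1 \<noteq> y1\<close> \<open>z1 \<noteq> u3\<close>
      \<open>z2 \<noteq> x1\<close> \<open>z2 \<noteq> y1\<close> \<open>z2 \<noteq> u3\<close> \<open>z1 \<noteq> z2\<close>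
    by auto
  have n1: "\<not> adj E a1 a2" using c3[of r a1 a2] dl ra ar by auto
  have n2: "\<not> adj E a1 y1" using c4[of r a1 y1 a2] dl ra ar y1a by auto
  have n3: "\<not> adj E x1 a2" using c4[of r a1 x1 a2] dl ra ar x1 by auto
  have n4: "\<not> adj E x1 y1" using c5[of r a1 x1 y1 a2] dl ra ar x1 y1a by auto
  have n5: "\<not> adj E a3 a4" using c3[of r a3 a4] dl ra ar by auto
  have n6: "\<not> adj E a3 w3" using c4[of r a3 w3 a4] dl ra ar wa by auto
  have n7: "\<not> adj E u3 a4" using c4[of r a3 u3 a4] dl ra ar u3 by auto
  have n8: "\<not> adj E u3 w3" using c5[of r a3 u3 w3 a4] dl ra ar u3 wa by auto
  have n9: "\<not> adj E w1 w2" using c3[of a4 w1 w2] dl aw wa by auto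
  have n10: "\<not> adj E w1 z2" using c4[of a4 w1 z2 w2] dl aw wa z2w by auto
  have n11: "\<not> adj E z1 w2" using c4[of a4 w1 z1 w2] dl aw wa z1 by auto
  have n12: "\<not> adj E z1 z2" using c5[of a4 w1 z1 z2 w2] dl aw wa z1 z2w by auto

  define P1 where "P1 = {a1,x1}"
  define P2 where "P2 = {a2,y1}"
  define P3 where "P3 = {a3,u3}"
  define P4 where "P4 = {a4,w3}"
  define P5 where "P5 = {w1,z1}"
  define P6 where "P6 = {w2,z2}"
  define Pre where "Pre = {P1,P2,P3,P4,P5,P6}"
  have PE: "Pre \<subseteq> E" unfolding Pre_def P1_def P2_def P3_def P4_def P5_def P6_def
    using x1 y1 u3 aw z1 z2 by (auto simp: adj_def)
  have i12: "P1 \<inter> P2 = {}" unfolding P1_def P2_def using dl by auto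
  have i13: "P1 \<inter> P3 = {}" unfolding P1_def P3_def using dl by auto
  have i14: "P1 \<inter> P4 = {}" unfolding P1_def P4_def using dl by auto
  have i15: "P1 \<inter> P5 = {}" unfolding P1_def P5_def using dl by auto
  have i16: "P1 \<inter> P6 = {}" unfolding P1_def P6_def using dl by auto
  have i21: "P2 \<inter> P1 = {}" unfolding P2_def P1_def using dl by auto
  have i23: "P2 \<inter> P3 = {}" unfolding P2_def P3_def using dl by auto
  have i24: "P2 \<inter> P4 = {}" unfolding P2_def P4_def using dl by auto
  have i25: "P2 \<inter> P5 = {}" unfolding P2_def P5_def using dl by auto
  have i26: "P2 \<inter> P6 = {}" unfolding P2_def P6_def using dl by auto
  have i31: "P3 \<inter> P1 = {}" unfolding P3_def P1_def using dl by auto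
  have i32: "P3 \<inter> P2 = {}" unfolding P3_def P2_def using dl by auto
  have i34: "P3 \<inter> P4 = {}" unfolding P3_def P4_def using dl by auto
  have i35: "P3 \<inter> P5 = {}" unfolding P3_def P5_def using dl by auto
  have i36: "P3 \<inter> P6 = {}" unfolding P3_def P6_def using dl by auto
  have i41: "P4 \<inter> P1 = {}" unfolding P4_def P1_def using dl by auto
  have i42: "P4 \<inter> P2 = {}" unfolding P4_def P2_def using dl by auto
  have i43: "P4 \<inter> P3 = {}" unfolding P4_def P3_def using dl by auto
  have i45: "P4 \<inter> P5 = {}" unfolding P4_def P5_def using dl by auto
  have i46: "P4 \<inter> P6 = {}" unfolding P4_def P6_def using dl by auto
  have i51: "P5 \<inter> P1 = {}" unfolding P5_def P1_def using dl by auto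
  have i52: "P5 \<inter> P2 = {}" unfolding P5_def P2_def using dl by auto
  have i53: "P5 \<inter> P3 = {}" unfolding P5_def P3_def using dl by auto
  have i54: "P5 \<inter> P4 = {}" unfolding P5_def P4_def using dl by auto
  have i56: "P5 \<inter> P6 = {}" unfolding P5_def P6_def using dl by auto
  have i61: "P6 \<inter> P1 = {}" unfolding P6_def P1_def using dl by auto
  have i62: "P6 \<inter> P2 = {}" unfolding P6_def P2_def using dl by auto
  have i63: "P6 \<inter> P3 = {}" unfolding P6_def P3_def using dl by auto
  have i64: "P6 \<inter> P4 = {}" unfolding P6_def P4_def using dl by auto
  have i65: "P6 \<inter> P5 = {}" unfolding P6_def P5_def using dl by auto
  have Pd: "distinct [P1,P2,P3,P4,P5,P6]"
    using i12 i13 i14 i15 i16 i21 i23 i24 i25 i26 i31 i32 i34 i35 i36 i41 i42 i43 i45 i46 i51 i52 i53 i54 i56 i61 i62 i63 i64 i65 unfolding P1_def P2_def P3_def P4_def P5_def P6_def by auto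
  have Pdisj: "\<forall>f\<in>Pre. \<forall>g\<in>Pre. f \<inter> g \<noteq> {} \<longrightarrow> f = g"
    unfolding Pre_def using i12 i13 i14 i15 i16 i21 i23 i24 i25 i26 i31 i32 i34 i35 i36 i41 i42 i43 i45 i46 i51 i52 i53 i54 i56 i61 i62 i63 i64 i65 by simp
  have rP: "\<forall>f\<in>Pre. r \<notin> f"
    unfolding Pre_def P1_def P2_def P3_def P4_def P5_def P6_def using dl by simp
  have nc12: "\<not> cf E P1 P2" unfolding P1_def P2_def
    by (rule noconf[OF G(1)]) (use dl n1 n2 n3 n4 in auto)
  have nc34: "\<not> cf E P3 P4" unfolding P3_def P4_def
    by (rule noconf[OF G(1)]) (use dl n5 n6 n7 n8 in auto)
  have nc56: "\<not> cf E P5 P6" unfolding P5_def P6_def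
    by (rule noconf[OF G(1)]) (use dl n9 n10 n11 n12 in auto)
  define c0 :: "'a set \<Rightarrow> nat" where
    "c0 = (\<lambda>e. if e = P1 \<or> e = P2 then 0 else if e = P3 \<or> e = P4 then 1 else 2)"
  have ne12: "P1 \<noteq> P2" using i12 unfolding P1_def by blast
  have ne13: "P1 \<noteq> P3" using i13 unfolding P1_def by blast
  have ne14: "P1 \<noteq> P4" using i14 unfolding P1_def by blast
  have ne15: "P1 \<noteq> P5" using i15 unfolding P1_def by blast
  have ne16: "P1 \<noteq> P6" using i16 unfolding P1_def by blast
  have ne21: "P2 \<noteq> P1" using i21 unfolding P2_def by blast
  have ne23: "P2 \<noteq> P3" using i23 unfolding P2_def by blast
  have ne24: "P2 \<noteq> P4" using i24 unfolding P2_def by blast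
  have ne25: "P2 \<noteq> P5" using i25 unfolding P2_def by blast
  have ne26: "P2 \<noteq> P6" using i26 unfolding P2_def by blast
  have ne31: "P3 \<noteq> P1" using i31 unfolding P3_def by blast
  have ne32: "P3 \<noteq> P2" using i32 unfolding P3_def by blast
  have ne34: "P3 \<noteq> P4" using i34 unfolding P3_def by blast
  have ne35: "P3 \<noteq> P5" using i35 unfolding P3_def by blast
  have ne36: "P3 \<noteq> P6" using i36 unfolding P3_def by blast
  have ne41: "P4 \<noteq> P1" using i41 unfolding P4_def by blast
  have ne42: "P4 \<noteq> P2" using i42 unfolding P4_def by blast
  have ne43: "P4 \<noteq> P3" using i43 unfolding P4_def by blast
  have ne45: "P4 \<noteq> P5" using i45 unfolding P4_def by blast
  have ne46: "P4 \<noteq> P6" using i46 unfolding P4_def by blast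
  have ne51: "P5 \<noteq> P1" using i51 unfolding P5_def by blast
  have ne52: "P5 \<noteq> P2" using i52 unfolding P5_def by blast
  have ne53: "P5 \<noteq> P3" using i53 unfolding P5_def by blast
  have ne54: "P5 \<noteq> P4" using i54 unfolding P5_def by blast
  have ne56: "P5 \<noteq> P6" using i56 unfolding P5_def by blast
  have ne61: "P6 \<noteq> P1" using i61 unfolding P6_def by blast
  have ne62: "P6 \<noteq> P2" using i62 unfolding P6_def by blast
  have ne63: "P6 \<noteq> P3" using i63 unfolding P6_def by blast
  have ne64: "P6 \<noteq> P4" using i64 unfolding P6_def by blast
  have ne65: "P6 \<noteq> P5" using i65 unfolding P6_def by blast
  have c0v: "c0 P1 = 0" "c0 P2 = 0" "c0 P3 = 1" "c0 P4 = 1" "c0 P5 = 2" "c0 P6 = 2"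
    unfolding c0_def using ne12 ne13 ne14 ne15 ne16 ne21 ne23 ne24 ne25 ne26 ne31 ne32 ne34 ne35 ne36 ne41 ne42 ne43 ne45 ne46 ne51 ne52 ne53 ne54 ne56 ne61 ne62 ne63 ne64 ne65 by simp_all
  have cfirr: "\<not> cf E f f" for f unfolding cf_def by blast
  have propc0: "propc E Pre c0"
    unfolding propc_def
  proof (intro conjI ballI impI)
    fix e assume "e \<in> Pre" then show "c0 e < 22" unfolding c0_def by auto
  next
    fix e f assume e: "e \<in> Pre" and f: "f \<in> Pre" and ef: "cf E e f"
    have nc21: "\<not> cf E P2 P1" "\<not> cf E P4 P3" "\<not> cf E P6 P5"
      using nc12 nc34 nc56 cf_sym by blast+
    have "e = P1 \<or> e = P2 \<or> e = P3 \<or> e = P4 \<or> e = P5 \<or> e = P6" using e unfolding Pre_def by simp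
    moreover have "f = P1 \<or> f = P2 \<or> f = P3 \<or> f = P4 \<or> f = P5 \<or> f = P6" using f unfolding Pre_def by simp
    ultimately show "c0 e \<noteq> c0 f"
      using ef by (elim disjE) (simp_all add: c0v cfirr nc12 nc34 nc56 nc21)
  qed

  define L where "L = lvl E r"
  define lev where "lev = (\<lambda>e. Min (L ` e))"
  define R where "R = gstar E r"
  have R: "R = {{r,a1},{r,a2},{r,a3},{r,a4}}" unfolding R_def gstar_nbrs[OF G(1)] Nr by simp
  have RE: "R \<subseteq> E" unfolding R_def gstar_def by auto
  define Rest where "Rest = E - Pre - R"
  obtain ys where ys: "set ys = Rest" "distinct ys"
    using finite_distinct_list[of Rest] fE unfolding Rest_def by auto
  define key where "key = (\<lambda>e. - int (lev e))"
  define zs where "zs = sort_key key ys"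
  have zs: "set zs = Rest" "distinct zs" "sorted (map key zs)" using ys unfolding zs_def by auto
  have fedge: "finite e" if "e \<in> E" for e using simple_edge[OF G(1) that] by auto
  have lev_le: "lev f \<le> L p" if "f \<in> E" "p \<in> f" for f p
    unfolding lev_def using fedge[OF that(1)] that(2) by (intro Min_le) auto
  have cond: "\<forall>i<length zs. card (conf E (zs!i) \<inter> (Pre \<union> set (take i zs))) < 22"
  proof (intro allI impI)
    fix i assume i: "i < length zs"
    define e where "e = zs ! i"
    have eR: "e \<in> Rest" using i zs(1) unfolding e_def using nth_mem by blast
    then have eE: "e \<in> E" and eP: "e \<notin> Pre" and eRR: "e \<notin> R" unfolding Rest_def by auto
    have re: "r \<notin> e" using eE eRR unfolding R_def gstar_def by auto
    have ne: "e \<noteq> {}" using simple_edge[OF G(1) eE] by auto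
    have "lev e \<in> L ` e" unfolding lev_def using fedge[OF eE] ne by (intro Min_in) auto
    then obtain x0 where x0: "x0 \<in> e" "L x0 = lev e" by auto
    have x0V: "x0 \<in> V" using x0(1) eE G(1) unfolding simple_graph_def by auto
    have x0r: "x0 \<noteq> r" using x0(1) re by auto
    obtain p where p: "adj E p x0" "L p < L x0"
      using lvl_parent[OF conn[rule_format, OF x0V] x0r] unfolding L_def by blast
    have pV: "p \<in> V" using aV[OF p(1)] by auto
    define S where "S = gstar E p"
    have cS: "card S = 4" unfolding S_def using card_gstar[OF G pV] .
    have fS: "finite S" unfolding S_def using finite_gstar[OF G(1)] .
    have Sconf: "S \<subseteq> conf E e"
    proof
      fix f assume f: "f \<in> S"
      then have fE': "f \<in> E" "p \<in> f" unfolding S_def gstar_def by auto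
      have "e \<noteq> f"
      proof
        assume "e = f"
        then have "lev e \<le> L p" using lev_le[OF eE] fE'(2) by auto
        then show False using p x0 by auto
      qed
      moreover have "{p,x0} \<in> E" using p(1) unfolding adj_def .
      ultimately have "cf E e f" using cfI[of e f "{p,x0}" E x0 p] x0(1) fE'(2) by auto
      then show "f \<in> conf E e" unfolding conf_def using fE' by auto
    qed
    have Stake: "S \<inter> set (take i zs) = {}"
    proof (rule ccontr)
      assume "S \<inter> set (take i zs) \<noteq> {}"
      then obtain f where f: "f \<in> S" "f \<in> set (take i zs)" by blast
      then obtain j where j: "j < length (take i zs)" "take i zs ! j = f" by (auto simp: in_set_conv_nth)
      then have j2: "j < i" "zs ! j = f" using i by auto
      have "(map key zs) ! j \<le> (map key zs) ! i"
        using sorted_nth_mono[OF zs(3), of j i] j2 i by auto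
      then have "key f \<le> key e" using j2 i unfolding e_def by auto
      then have "lev e \<le> lev f" unfolding key_def by auto
      moreover have "lev f \<le> L p" using f(1) lev_le unfolding S_def gstar_def by auto
      ultimately show False using p x0 by auto
    qed
    have SP1: "card (S \<inter> Pre) \<le> 1"
    proof -
      have "\<forall>f\<in>S \<inter> Pre. \<forall>g\<in>S \<inter> Pre. f = g"
      proof (intro ballI)
        fix f g assume "f \<in> S \<inter> Pre" "g \<in> S \<inter> Pre"
        then have "p \<in> f \<inter> g" "f \<in> Pre" "g \<in> Pre" unfolding S_def gstar_def by auto
        then show "f = g" using Pdisj by blast
      qed
      then show ?thesis using fS card_le_Suc0_iff_eq[of "S \<inter> Pre"] by auto
    qed
    have SP: "card (S - Pre) \<ge> 3"
      using card_Diff_subset_Int[of S Pre] fS cS SP1 by auto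
    have fc: "finite (conf E e)" using fE unfolding conf_def by auto
    have "conf E e \<inter> (Pre \<union> set (take i zs)) \<subseteq> conf E e - (S - Pre)" using Stake by blast
    then have "card (conf E e \<inter> (Pre \<union> set (take i zs))) \<le> card (conf E e - (S - Pre))"
      using fc by (intro card_mono) auto
    also have "\<dots> = card (conf E e) - card (S - Pre)"
      using Sconf fS by (intro card_Diff_subset) auto
    also have "\<dots> \<le> 21" using conf_card[OF G eE] SP by linarith
    finally show "card (conf E (zs!i) \<inter> (Pre \<union> set (take i zs))) < 22" unfolding e_def by linarith
  qed
  obtain c1 where c1: "propc E (Pre \<union> set zs) c1" "\<forall>f\<in>Pre. c1 f = c0 f"
    using greedy_list[OF propc0 PE _ _ zs(2) fE cond] zs(1) unfolding Rest_def by auto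

  define e1 where "e1 = {r,a1}"
  define e2 where "e2 = {r,a2}"
  define e3 where "e3 = {r,a3}"
  define e4 where "e4 = {r,a4}"
  define D0 where "D0 = Pre \<union> set zs"
  have eE: "e1 \<in> E" "e2 \<in> E" "e3 \<in> E" "e4 \<in> E" using ra unfolding e1_def e2_def e3_def e4_def adj_def by auto
  have eR: "e1 \<in> R" "e2 \<in> R" "e3 \<in> R" "e4 \<in> R" unfolding R e1_def e2_def e3_def e4_def by auto
  have eP: "e1 \<notin> Pre" "e2 \<notin> Pre" "e3 \<notin> Pre" "e4 \<notin> Pre" using rP unfolding e1_def e2_def e3_def e4_def by auto
  have eD0: "e1 \<notin> D0" "e2 \<notin> D0" "e3 \<notin> D0" "e4 \<notin> D0" using eR eP unfolding D0_def zs(1) Rest_def by auto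
  have D0E: "D0 \<subseteq> E" using PE unfolding D0_def zs(1) Rest_def by auto
  have ed: "distinct [e1,e2,e3,e4]" using da unfolding e1_def e2_def e3_def e4_def by (auto simp: doubleton_eq_iff)
  have ecf: "e \<in> {e1,e2,e3,e4} \<Longrightarrow> f \<in> {e1,e2,e3,e4} \<Longrightarrow> e \<noteq> f \<Longrightarrow> f \<in> conf E e" for e f
  proof -
    assume a: "e \<in> {e1,e2,e3,e4}" "f \<in> {e1,e2,e3,e4}" "e \<noteq> f"
    then have "e \<in> E" "f \<in> E" "r \<in> e" "r \<in> f" using eE unfolding e1_def e2_def e3_def e4_def by auto
    then show "f \<in> conf E e" unfolding conf_def using cfI[of e f e E r r] a(3) by auto
  qed
  have Pcf: "P \<in> conf E e" if A: "e \<in> {e1,e2,e3,e4}" "P \<in> {P1,P2,P3,P4}" for e P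
  proof -
    have "P \<in> Pre" "r \<notin> P" using A(2) rP unfolding Pre_def by auto
    then have "P \<in> E" "e \<noteq> P" "e \<in> E" "r \<in> e" using PE A(1) eE unfolding e1_def e2_def e3_def e4_def by auto
    moreover obtain a where "a \<in> P" "{r,a} \<in> E" using A(2) ra unfolding P1_def P2_def P3_def P4_def adj_def by auto
    ultimately show ?thesis unfolding conf_def using cfI[of e P "{r,a}" E r a] by auto
  qed
  have P5cf: "P \<in> conf E e4" if A: "P \<in> {P5,P6}" for P
  proof -
    have "P \<in> Pre" "r \<notin> P" using A rP unfolding Pre_def by auto
    then have "P \<in> E" "e4 \<noteq> P" using PE unfolding e4_def by auto
    moreover obtain w where "w \<in> P" "{a4,w} \<in> E" using A aw unfolding P5_def P6_def adj_def by auto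
    ultimately show ?thesis unfolding conf_def using cfI[of e4 P "{a4,w}" E a4 w] unfolding e4_def by auto
  qed
  have PD0: "Pre \<subseteq> D0" unfolding D0_def by auto
  have c1D0: "propc E D0 c1" using c1(1) unfolding D0_def .
  obtain c2 where c2: "propc E (insert e1 D0) c2" "\<forall>f\<in>D0. c2 f = c1 f"
  proof -
    have "\<exists>c'. propc E (insert e1 D0) c' \<and> (\<forall>f\<in>D0. c' f = c1 f)"
      by (rule root_step[OF c1D0 D0E eD0(1) eE(1) fE conf_card[OF G eE(1)], of "{e2,e3,e4}" "{}"])
         (use ecf ed eD0 in auto)
    then show ?thesis using that by blast
  qed
  define D1 where "D1 = insert e1 D0"
  have D1E: "D1 \<subseteq> E" using D0E eE unfolding D1_def by auto
  have eD1: "e2 \<notin> D1" "e3 \<notin> D1" "e4 \<notin> D1" using eD0 ed unfolding D1_def by auto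
  have c2P: "\<forall>f\<in>Pre. c2 f = c0 f" using c2(2) c1(2) PD0 by auto
  obtain c3 where c3: "propc E (insert e2 D1) c3" "\<forall>f\<in>D1. c3 f = c2 f"
  proof -
    have "\<exists>c'. propc E (insert e2 D1) c' \<and> (\<forall>f\<in>D1. c' f = c2 f)"
    proof (rule root_step[OF c2(1)[folded D1_def] D1E eD1(1) eE(2) fE conf_card[OF G eE(2)], of "{e3,e4}" "{P2,P4}"])
      show "{e3, e4} \<subseteq> conf E e2" using ecf ed by auto
      show "{e3, e4} \<inter> D1 = {}" using eD1 by auto
      have "P1 \<in> D1" "P2 \<in> D1" "P3 \<in> D1" "P4 \<in> D1" using PD0 unfolding D1_def Pre_def by auto
      then show "{P2, P4} \<subseteq> conf E e2 \<inter> D1" using Pcf by auto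
      show "\<forall>y\<in>{P2, P4}. \<exists>x\<in>conf E e2 \<inter> D1 - {P2, P4}. c2 x = c2 y"
      proof (rule rep2)
        show "P1 \<in> conf E e2 \<inter> D1" "P3 \<in> conf E e2 \<inter> D1" using Pcf \<open>P1 \<in> D1\<close> \<open>P3 \<in> D1\<close> by auto
        show "P1 \<notin> {P2,P4}" "P3 \<notin> {P2,P4}" using ne12 ne14 ne32 ne34 by auto
        have "P1 \<in> Pre" "P2 \<in> Pre" "P3 \<in> Pre" "P4 \<in> Pre" unfolding Pre_def by auto
        then show "c2 P1 = c2 P2" "c2 P3 = c2 P4" using c2P c0v by auto
      qed
      show "3 \<le> card {e3, e4} + card {P2, P4}" using ed ne24 by auto
    qed
    then show ?thesis using that by blast
  qed
  define D2 where "D2 = insert e2 D1"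
  have D2E: "D2 \<subseteq> E" using D1E eE unfolding D2_def by auto
  have eD2: "e3 \<notin> D2" "e4 \<notin> D2" using eD1 ed unfolding D2_def by auto
  have PD2: "Pre \<subseteq> D2" using PD0 unfolding D2_def D1_def by auto
  have c3P: "\<forall>f\<in>Pre. c3 f = c0 f" using c3(2) c2P PD0 unfolding D1_def by auto
  obtain c4 where c4: "propc E (insert e3 D2) c4" "\<forall>f\<in>D2. c4 f = c3 f"
  proof -
    have "\<exists>c'. propc E (insert e3 D2) c' \<and> (\<forall>f\<in>D2. c' f = c3 f)"
    proof (rule root_step[OF c3(1)[folded D2_def] D2E eD2(1) eE(3) fE conf_card[OF G eE(3)], of "{e4}" "{P2,P4}"])
      show "{e4} \<subseteq> conf E e3" using ecf ed by auto
      show "{e4} \<inter> D2 = {}" using eD2 by auto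
      have "P1 \<in> D2" "P2 \<in> D2" "P3 \<in> D2" "P4 \<in> D2" using PD2 unfolding Pre_def by auto
      then show "{P2, P4} \<subseteq> conf E e3 \<inter> D2" using Pcf by auto
      show "\<forall>y\<in>{P2, P4}. \<exists>x\<in>conf E e3 \<inter> D2 - {P2, P4}. c3 x = c3 y"
      proof (rule rep2)
        show "P1 \<in> conf E e3 \<inter> D2" "P3 \<in> conf E e3 \<inter> D2" using Pcf \<open>P1 \<in> D2\<close> \<open>P3 \<in> D2\<close> by auto
        show "P1 \<notin> {P2,P4}" "P3 \<notin> {P2,P4}" using ne12 ne14 ne32 ne34 by auto
        have "P1 \<in> Pre" "P2 \<in> Pre" "P3 \<in> Pre" "P4 \<in> Pre" unfolding Pre_def by auto
        then show "c3 P1 = c3 P2" "c3 P3 = c3 P4" using c3P c0v by auto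
      qed
      show "3 \<le> card {e4} + card {P2, P4}" using ne24 by auto
    qed
    then show ?thesis using that by blast
  qed
  define D3 where "D3 = insert e3 D2"
  have D3E: "D3 \<subseteq> E" using D2E eE unfolding D3_def by auto
  have eD3: "e4 \<notin> D3" using eD2 ed unfolding D3_def by auto
  have PD3: "Pre \<subseteq> D3" using PD2 unfolding D3_def by auto
  have c4P: "\<forall>f\<in>Pre. c4 f = c0 f" using c4(2) c3P PD2 by auto
  obtain c5 where c5: "propc E (insert e4 D3) c5"
  proof -
    have "\<exists>c'. propc E (insert e4 D3) c' \<and> (\<forall>f\<in>D3. c' f = c4 f)"
    proof (rule root_step[OF c4(1)[folded D3_def] D3E eD3 eE(4) fE conf_card[OF G eE(4)], of "{}" "{P2,P4,P6}"])
      have "P1 \<in> D3" "P2 \<in> D3" "P3 \<in> D3" "P4 \<in> D3" "P5 \<in> D3" "P6 \<in> D3" using PD3 unfolding Pre_def by auto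
      then show "{P2, P4, P6} \<subseteq> conf E e4 \<inter> D3" using Pcf P5cf by auto
      show "\<forall>y\<in>{P2, P4, P6}. \<exists>x\<in>conf E e4 \<inter> D3 - {P2, P4, P6}. c4 x = c4 y"
      proof (rule rep3)
        show "P1 \<in> conf E e4 \<inter> D3" "P3 \<in> conf E e4 \<inter> D3" "P5 \<in> conf E e4 \<inter> D3"
          using Pcf P5cf \<open>P1 \<in> D3\<close> \<open>P3 \<in> D3\<close> \<open>P5 \<in> D3\<close> by auto
        show "P1 \<notin> {P2,P4,P6}" "P3 \<notin> {P2,P4,P6}" "P5 \<notin> {P2,P4,P6}"
          using ne12 ne14 ne16 ne32 ne34 ne36 ne52 ne54 ne56 by auto
        have "P1 \<in> Pre" "P2 \<in> Pre" "P3 \<in> Pre" "P4 \<in> Pre" "P5 \<in> Pre" "P6 \<in> Pre" unfolding Pre_def by auto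
        then show "c4 P1 = c4 P2" "c4 P3 = c4 P4" "c4 P5 = c4 P6" using c4P c0v by auto
      qed
      show "3 \<le> card {} + card {P2, P4, P6}" using ne24 ne26 ne46 by auto
    qed simp_all
    then show ?thesis using that by blast
  qed
  have "insert e4 D3 = E"
  proof
    show "insert e4 D3 \<subseteq> E" using D3E eE by auto
    show "E \<subseteq> insert e4 D3"
    proof
      fix f assume "f \<in> E"
      then have "f \<in> Pre \<or> f \<in> Rest \<or> f \<in> R" unfolding Rest_def by auto
      then show "f \<in> insert e4 D3" unfolding D3_def D2_def D1_def D0_def zs(1) R e1_def e2_def e3_def e4_def by auto
    qed
  qed
  then show ?thesis using c5 by auto
qed



lemma girth_mono: "E1 \<subseteq> E \<Longrightarrow> girth_at_least E g \<Longrightarrow> girth_at_least E1 g"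
  unfolding girth_at_least_def is_cycle_def by blast

lemma reach_V: "(adj E)\<^sup>*\<^sup>* r v \<Longrightarrow> simple_graph V E \<Longrightarrow> r \<in> V \<Longrightarrow> v \<in> V"
proof (induction rule: rtranclp_induct)
  case base then show ?case by simp
next
  case (step y z) then show ?case using adj_V[of V E y z] by blast
qed

lemma main_col:
  "simple_graph V E \<Longrightarrow> regular V E 4 \<Longrightarrow> girth_at_least E 6 \<Longrightarrow> \<exists>c. propc E E c"
proof (induction "card V" arbitrary: V E rule: less_induct)
  case less
  note G = less.prems(1,2) and gir = less.prems(3)
  show ?case
  proof (cases "V = {}")
    case True
    have "\<forall>e\<in>E. e = {} \<and> card e = 2" using G(1) True unfolding simple_graph_def by auto
    then have "E = {}" by force
    then show ?thesis unfolding propc_def by auto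
  next
    case False
    then obtain r where rV: "r \<in> V" by blast
    define C where "C = {v. (adj E)\<^sup>*\<^sup>* r v}"
    have CV: "C \<subseteq> V" unfolding C_def using reach_V[OF _ G(1) rV] by blast
    have rC: "r \<in> C" unfolding C_def by simp
    have clos: "adj E x y \<Longrightarrow> x \<in> C \<longleftrightarrow> y \<in> C" for x y
    proof -
      assume a: "adj E x y"
      then have b: "adj E y x" by (rule adj_sym)
      show "x \<in> C \<longleftrightarrow> y \<in> C" unfolding C_def mem_Collect_eq
        using rtranclp.rtrancl_into_rtrancl[of "adj E" r x y] rtranclp.rtrancl_into_rtrancl[of "adj E" r y x] a b
        by blast
    qed
    have side: "e \<subseteq> C \<or> e \<subseteq> V - C" if eE: "e \<in> E" for e
    proof -
      obtain x y where e: "e = {x,y}" "x \<in> V" "y \<in> V" using simple_edge[OF G(1) eE] by blast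
      then have "adj E x y" using eE unfolding adj_def by simp
      then show ?thesis using clos[of x y] e by auto
    qed
    show ?thesis
    proof (cases "V \<subseteq> C")
      case True
      then have "\<forall>v\<in>V. (adj E)\<^sup>*\<^sup>* r v" unfolding C_def by auto
      then show ?thesis using connected_case[OF G gir rV] by blast
    next
      case False
      define E1 where "E1 = {e\<in>E. e \<subseteq> C}"
      define E2 where "E2 = {e\<in>E. e \<subseteq> V - C}"
      have fV: "finite V" using G(1) unfolding simple_graph_def by auto
      have lt1: "card C < card V" by (intro psubset_card_mono fV) (use False CV in blast)
      have lt2: "card (V - C) < card V" by (intro psubset_card_mono fV) (use rC rV in blast)
      have cardE: "\<forall>e\<in>E. card e = 2" using G(1) unfolding simple_graph_def by blast
      have s1: "simple_graph C E1" unfolding simple_graph_def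
        using finite_subset[OF CV fV] cardE unfolding E1_def by blast
      have s2: "simple_graph (V - C) E2" unfolding simple_graph_def
        using fV cardE unfolding E2_def by blast
      have r1: "regular C E1 4" unfolding regular_def degree_def
      proof
        fix v assume v: "v \<in> C"
        have "{e \<in> E1. v \<in> e} = {e \<in> E. v \<in> e}"
        proof (intro Collect_cong iffI conjI)
          fix e assume "e \<in> E \<and> v \<in> e"
          then have "e \<in> E" "v \<in> e" by auto
          then have "e \<subseteq> C" using side[of e] v by blast
          then show "e \<in> E1" unfolding E1_def using \<open>e \<in> E\<close> by simp
        qed (auto simp: E1_def)
        then show "card {e \<in> E1. v \<in> e} = 4" using G(2) v CV unfolding regular_def degree_def by auto
      qed
      have r2: "regular (V - C) E2 4" unfolding regular_def degree_def
      proof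
        fix v assume v: "v \<in> V - C"
        have "{e \<in> E2. v \<in> e} = {e \<in> E. v \<in> e}"
        proof (intro Collect_cong iffI conjI)
          fix e assume "e \<in> E \<and> v \<in> e"
          then have "e \<in> E" "v \<in> e" by auto
          then have "e \<subseteq> V - C" using side[of e] v by blast
          then show "e \<in> E2" unfolding E2_def using \<open>e \<in> E\<close> by simp
        qed (auto simp: E2_def)
        then show "card {e \<in> E2. v \<in> e} = 4" using G(2) v unfolding regular_def degree_def by auto
      qed
      have "E1 \<subseteq> E" "E2 \<subseteq> E" unfolding E1_def E2_def by auto
      then have g1: "girth_at_least E1 6" and g2: "girth_at_least E2 6" using girth_mono gir by blast+
      have "\<exists>c. propc E1 E1 c" by (rule less.hyps[OF lt1 s1 r1 g1])
      then obtain c1 where c1: "propc E1 E1 c1" ..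
      have "\<exists>c. propc E2 E2 c" by (rule less.hyps[OF lt2 s2 r2 g2])
      then obtain c2 where c2: "propc E2 E2 c2" ..
      define c where "c = (\<lambda>e. if e \<subseteq> C then c1 e else c2 e)"
      have "propc E E c" unfolding propc_def
      proof (intro conjI ballI impI)
        fix e assume e: "e \<in> E"
        show "c e < 22"
        proof (cases "e \<subseteq> C")
          case True then show ?thesis using c1 e unfolding c_def propc_def E1_def by auto
        next
          case False then have "e \<subseteq> V - C" using side e by blast
          then show ?thesis using c2 e False unfolding c_def propc_def E2_def by auto
        qed
      next
        fix e f assume e: "e \<in> E" and f: "f \<in> E" and ef: "cf E e f"
        then obtain g where g: "g \<in> E" "g \<inter> e \<noteq> {}" "g \<inter> f \<noteq> {}" "e \<noteq> f" unfolding cf_def by blast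
        have ne: "e \<noteq> {}" using simple_edge[OF G(1) e] by auto
        show "c e \<noteq> c f"
        proof (cases "g \<subseteq> C")
          case True
          then have "e \<subseteq> C" "f \<subseteq> C" using side[OF e] side[OF f] g by blast+
          then have "cf E1 e f" using g True unfolding cf_def E1_def by blast
          moreover have "e \<in> E1" "f \<in> E1" using e f \<open>e \<subseteq> C\<close> \<open>f \<subseteq> C\<close> unfolding E1_def by auto
          ultimately show ?thesis using c1 \<open>e \<subseteq> C\<close> \<open>f \<subseteq> C\<close> unfolding propc_def c_def by auto
        next
          case False
          then have gV: "g \<subseteq> V - C" using side[OF g(1)] by blast
          then have "e \<subseteq> V - C" "f \<subseteq> V - C" using side[OF e] side[OF f] g by blast+
          then have "cf E2 e f" using g gV unfolding cf_def E2_def by blast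
          moreover have "e \<in> E2" "f \<in> E2" using e f \<open>e \<subseteq> V - C\<close> \<open>f \<subseteq> V - C\<close> unfolding E2_def by auto
          moreover have "\<not> e \<subseteq> C" "\<not> f \<subseteq> C"
            using \<open>e \<subseteq> V - C\<close> \<open>f \<subseteq> V - C\<close> ne simple_edge[OF G(1) f] by auto
          ultimately show ?thesis using c2 unfolding propc_def c_def by auto
        qed
      qed
      then show ?thesis by blast
    qed
  qed
qed

theorem lemma2:
  fixes V :: "'a set" and E :: "'a set set"
  assumes "simple_graph V E"
    and "regular V E 4"
    and "girth_at_least E 6"
  shows "\<exists>c. strong_edge_coloring E c 22"
proof -
  obtain c where c: "propc E E c" using main_col[OF assms] by blast
  have "strong_edge_coloring E c 22" unfolding strong_edge_coloring_def
  proof (intro conjI)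
    show "\<forall>e\<in>E. c e < 22" using c unfolding propc_def by auto
    show "\<forall>e\<in>E. \<forall>f\<in>E. e \<noteq> f \<and> e \<inter> f \<noteq> {} \<longrightarrow> c e \<noteq> c f"
    proof (intro ballI impI)
      fix e f assume "e \<in> E" "f \<in> E" "e \<noteq> f \<and> e \<inter> f \<noteq> {}"
      then have "cf E e f" unfolding cf_def by blast
      then show "c e \<noteq> c f" using c \<open>e \<in> E\<close> \<open>f \<in> E\<close> unfolding propc_def by auto
    qed
    show "\<forall>u0 u1 u2 u3. distinct [u0, u1, u2, u3] \<and> {u0, u1} \<in> E \<and> {u1, u2} \<in> E \<and> {u2, u3} \<in> E
        \<longrightarrow> c {u0, u1} \<noteq> c {u1, u2} \<and> c {u1, u2} \<noteq> c {u2, u3} \<and> c {u0, u1} \<noteq> c {u2, u3}"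
    proof (intro allI impI)
      fix u0 u1 u2 u3
      assume a: "distinct [u0, u1, u2, u3] \<and> {u0, u1} \<in> E \<and> {u1, u2} \<in> E \<and> {u2, u3} \<in> E"
      have n1: "{u0,u1} \<noteq> {u1,u2}" "{u1,u2} \<noteq> {u2,u3}" "{u0,u1} \<noteq> {u2,u3}"
        using a by (auto simp: doubleton_eq_iff)
      have "cf E {u0,u1} {u1,u2}" using cfI[OF n1(1), of "{u0,u1}" E u1 u1] a by auto
      moreover have "cf E {u1,u2} {u2,u3}" using cfI[OF n1(2), of "{u1,u2}" E u2 u2] a by auto
      moreover have "cf E {u0,u1} {u2,u3}" using cfI[OF n1(3), of "{u1,u2}" E u1 u2] a by auto
      ultimately show "c {u0, u1} \<noteq> c {u1, u2} \<and> c {u1, u2} \<noteq> c {u2, u3} \<and> c {u0, u1} \<noteq> c {u2, u3}"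
        using c a unfolding propc_def by auto
    qed
  qed
  then show ?thesis by blast
qed

end
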